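(* Let $G$ be a real algebraic group and $H,L$ real algebraic subgroups, with complexifications $G_{\mathbb C},H_{\mathbb C},L_{\mathbb C}$. Put $X'_{\mathbb C}=H_{\mathbb C}\backslash G_{\mathbb C}$, $X_{\mathbb C}=G_{\mathbb C}/L_{\mathbb C}$, $$\Xi'=\{\mathcal O'\in X'_{\mathbb C}/L_{\mathbb C}:\mathcal O'(\mathbb R)\ne\emptyset\},\qquad \Xi=\{\mathcal O\in H_{\mathbb C}\backslash X_{\mathbb C}:\mathcal O(\mathbb R)\neq\emptyset\},$$ both regarded as subsets of $H_{\mathbb C}\backslash G_{\mathbb C}/L_{\mathbb C}$. If $H^1(\mathbb R,H_{\mathbb C})=1$, then $\Xi'\subset\Xi$. If moreover $H^1(\mathbb R,L_{\mathbb C})=1$, then $\Xi'=\Xi$.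
   Context: $H^1(\mathbb R,\cdot)$ denotes first Galois cohomology for $\mathrm{Gal}(\mathbb C/\mathbb R)$ acting through the given real structures; $\mathcal O(\mathbb R)$ denotes the set of real points of an orbit. An $L_{\mathbb C}$-orbit $\mathcal O'$ in $X'_{\mathbb C}$ and an $H_{\mathbb C}$-orbit $\mathcal O$ in $X_{\mathbb C}$ are identified with the same element of $H_{\mathbb C}\backslash G_{\mathbb C}/L_{\mathbb C}$ when they come from the same double coset. *)

theory Defs
  imports "HOL-Algebra.Coset"
begin

text \<open>A complex group G with a real structure sigma (an involutive group
automorphism; Gal(C/R) acts through it). Real points are sigma-fixed points.\<close>

definition real_structure :: "('a, 'b) monoid_scheme \<Rightarrow> ('a \<Rightarrow> 'a) \<Rightarrow> bool" where
  "real_structure G \<sigma> \<longleftrightarrow> \<sigma> \<in> hom G G \<and> (\<forall>x\<in>carrier G. \<sigma> (\<sigma> x) = x)"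

text \<open>First Galois cohomology H^1(R,K) is trivial: every 1-cocycle
(k with k * sigma(k) = 1) is a coboundary (k = g^-1 * sigma(g)).\<close>
definition H1_trivial :: "('a, 'b) monoid_scheme \<Rightarrow> ('a \<Rightarrow> 'a) \<Rightarrow> 'a set \<Rightarrow> bool" where
  "H1_trivial G \<sigma> K \<longleftrightarrow>
     (\<forall>k\<in>K. k \<otimes>\<^bsub>G\<^esub> \<sigma> k = \<one>\<^bsub>G\<^esub> \<longrightarrow> (\<exists>g\<in>K. k = inv\<^bsub>G\<^esub> g \<otimes>\<^bsub>G\<^esub> \<sigma> g))"

definition dcoset :: "('a, 'b) monoid_scheme \<Rightarrow> 'a set \<Rightarrow> 'a \<Rightarrow> 'a set \<Rightarrow> 'a set" where
  "dcoset G H g L = {h \<otimes>\<^bsub>G\<^esub> g \<otimes>\<^bsub>G\<^esub> l | h l. h \<in> H \<and> l \<in> L}"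

text \<open>Xi': double cosets whose L-orbit in X' = H\G (the cosets H x, x in HgL)
contains a real point, i.e. a coset fixed by the induced real structure.\<close>
definition Xi' :: "('a, 'b) monoid_scheme \<Rightarrow> ('a \<Rightarrow> 'a) \<Rightarrow> 'a set \<Rightarrow> 'a set \<Rightarrow> 'a set set" where
  "Xi' G \<sigma> H L = {dcoset G H g L | g. g \<in> carrier G \<and>
      (\<exists>x\<in>dcoset G H g L. \<sigma> ` (H #>\<^bsub>G\<^esub> x) = H #>\<^bsub>G\<^esub> x)}"

text \<open>Xi: double cosets whose H-orbit in X = G/L (the cosets x L, x in HgL)
contains a real point.\<close>
definition Xi :: "('a, 'b) monoid_scheme \<Rightarrow> ('a \<Rightarrow> 'a) \<Rightarrow> 'a set \<Rightarrow> 'a set \<Rightarrow> 'a set set" where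
  "Xi G \<sigma> H L = {dcoset G H g L | g. g \<in> carrier G \<and>
      (\<exists>x\<in>dcoset G H g L. \<sigma> ` (x <#\<^bsub>G\<^esub> L) = x <#\<^bsub>G\<^esub> L)}"

end

theory Submission
  imports Defs
begin

lemma rs_facts:
  assumes G: "group G" and rs: "real_structure G \<sigma>"
  shows "\<And>x. x \<in> carrier G \<Longrightarrow> \<sigma> x \<in> carrier G"
    and "\<And>x y. x \<in> carrier G \<Longrightarrow> y \<in> carrier G \<Longrightarrow> \<sigma> (x \<otimes>\<^bsub>G\<^esub> y) = \<sigma> x \<otimes>\<^bsub>G\<^esub> \<sigma> y"
    and "\<And>x. x \<in> carrier G \<Longrightarrow> \<sigma> (\<sigma> x) = x"
    and "\<And>x. x \<in> carrier G \<Longrightarrow> \<sigma> (inv\<^bsub>G\<^esub> x) = inv\<^bsub>G\<^esub> (\<sigma> x)"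
proof -
  have h: "\<sigma> \<in> hom G G" and inv: "\<forall>x\<in>carrier G. \<sigma> (\<sigma> x) = x"
    using rs unfolding real_structure_def by auto
  interpret gh: group_hom G G \<sigma> using G h by (simp add: group_hom_def group_hom_axioms_def)
  show "\<And>x. x \<in> carrier G \<Longrightarrow> \<sigma> x \<in> carrier G" by simp
  show "\<And>x y. x \<in> carrier G \<Longrightarrow> y \<in> carrier G \<Longrightarrow> \<sigma> (x \<otimes>\<^bsub>G\<^esub> y) = \<sigma> x \<otimes>\<^bsub>G\<^esub> \<sigma> y" by simp
  show "\<And>x. x \<in> carrier G \<Longrightarrow> \<sigma> (\<sigma> x) = x" using inv by simp
  show "\<And>x. x \<in> carrier G \<Longrightarrow> \<sigma> (inv\<^bsub>G\<^esub> x) = inv\<^bsub>G\<^esub> (\<sigma> x)" by simp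
qed

lemma sub_inv_eq:
  assumes G: "group G" and rs: "real_structure G \<sigma>" and H: "subgroup H G" and sH: "\<sigma> ` H \<subseteq> H"
  shows "\<sigma> ` H = H"
proof
  show "H \<subseteq> \<sigma> ` H"
  proof
    fix h assume "h \<in> H"
    then have "h \<in> carrier G" "\<sigma> h \<in> H" using H sH subgroup.subset by blast+
    then show "h \<in> \<sigma> ` H" using rs_facts(3)[OF G rs] by (metis image_eqI)
  qed
qed (rule sH)

lemma lc_img: "a <#\<^bsub>G\<^esub> H = (\<lambda>h. a \<otimes>\<^bsub>G\<^esub> h) ` H"
  unfolding l_coset_def by auto

lemma rc_img: "H #>\<^bsub>G\<^esub> a = (\<lambda>h. h \<otimes>\<^bsub>G\<^esub> a) ` H"
  unfolding r_coset_def by auto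

theorem lemmaB2:
  fixes G :: "('a, 'b) monoid_scheme" and \<sigma> :: "'a \<Rightarrow> 'a" and H L :: "'a set"
  assumes "group G"
    and "real_structure G \<sigma>"
    and "subgroup H G" and "\<sigma> ` H \<subseteq> H"
    and "subgroup L G" and "\<sigma> ` L \<subseteq> L"
    and "H1_trivial G \<sigma> H"
  shows "Xi' G \<sigma> H L \<subseteq> Xi G \<sigma> H L \<and>
         (H1_trivial G \<sigma> L \<longrightarrow> Xi' G \<sigma> H L = Xi G \<sigma> H L)"
proof -
  interpret group G by fact
  note G = assms(1) and rs = assms(2)
  note cl = rs_facts(1)[OF G rs] and mu = rs_facts(2)[OF G rs]
    and inv2 = rs_facts(3)[OF G rs] and si = rs_facts(4)[OF G rs]
  have Hc: "H \<subseteq> carrier G" using assms(3) subgroup.subset by blast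
  have Lc: "L \<subseteq> carrier G" using assms(5) subgroup.subset by blast
  have sH: "\<sigma> ` H = H" by (rule sub_inv_eq[OF G rs assms(3,4)])
  have sL: "\<sigma> ` L = L" by (rule sub_inv_eq[OF G rs assms(5,6)])
  interpret Hs: subgroup H G by fact
  interpret Ls: subgroup L G by fact
  have dc: "dcoset G H g L \<subseteq> carrier G" if "g \<in> carrier G" for g
    using that Hc Lc unfolding dcoset_def by auto
  have fw: "\<exists>y\<in>dcoset G H g L. \<sigma> ` (y <#\<^bsub>G\<^esub> L) = y <#\<^bsub>G\<^esub> L"
    if g: "g \<in> carrier G" and x: "x \<in> dcoset G H g L" and r: "\<sigma> ` (H #>\<^bsub>G\<^esub> x) = H #>\<^bsub>G\<^esub> x" for g x
  proof -
    have xc: "x \<in> carrier G" using dc[OF g] x by blast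
    have "\<sigma> x \<in> \<sigma> ` (H #>\<^bsub>G\<^esub> x)" using xc by (simp add: r_coset_def)
    then obtain h where h: "h \<in> H" and sx: "\<sigma> x = h \<otimes>\<^bsub>G\<^esub> x" using r unfolding r_coset_def by auto
    have hc: "h \<in> carrier G" using h Hc by blast
    have shH: "\<sigma> h \<in> H" using h assms(4) by blast
    have "x = \<sigma> (h \<otimes>\<^bsub>G\<^esub> x)" using sx inv2[OF xc] by simp
    also have "\<dots> = \<sigma> h \<otimes>\<^bsub>G\<^esub> (h \<otimes>\<^bsub>G\<^esub> x)" using sx mu[OF hc xc] by simp
    also have "\<dots> = (\<sigma> h \<otimes>\<^bsub>G\<^esub> h) \<otimes>\<^bsub>G\<^esub> x" using xc hc cl by (simp only: m_assoc)
    finally have e: "x = (\<sigma> h \<otimes>\<^bsub>G\<^esub> h) \<otimes>\<^bsub>G\<^esub> x" .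
    have "\<sigma> h \<otimes>\<^bsub>G\<^esub> h = \<one>\<^bsub>G\<^esub>" using e r_cancel_one'[OF xc m_closed[OF cl[OF hc] hc]] by blast
    then have "h \<otimes>\<^bsub>G\<^esub> \<sigma> h = \<one>\<^bsub>G\<^esub>" using hc cl by (metis inv_equality r_inv)
    then obtain k where k: "k \<in> H" and hk: "h = inv\<^bsub>G\<^esub> k \<otimes>\<^bsub>G\<^esub> \<sigma> k"
      using assms(7) h unfolding H1_trivial_def by blast
    have kc: "k \<in> carrier G" using k Hc by blast
    define y where "y = \<sigma> k \<otimes>\<^bsub>G\<^esub> x"
    have skH: "\<sigma> k \<in> H" using k assms(4) by blast
    have yc: "y \<in> carrier G" using y_def kc cl xc by simp
    have sy: "\<sigma> y = y"
    proof -
      have "\<sigma> y = k \<otimes>\<^bsub>G\<^esub> (inv\<^bsub>G\<^esub> k \<otimes>\<^bsub>G\<^esub> \<sigma> k \<otimes>\<^bsub>G\<^esub> x)" unfolding y_def by (simp only: mu[OF cl[OF kc] xc] inv2[OF kc] sx hk)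
      also have "\<dots> = y" unfolding y_def using kc cl xc by (simp add: m_assoc[symmetric])
      finally show ?thesis .
    qed
    have yd: "y \<in> dcoset G H g L"
    proof -
      obtain h1 l1 where xe: "x = h1 \<otimes>\<^bsub>G\<^esub> g \<otimes>\<^bsub>G\<^esub> l1" and h1: "h1 \<in> H" and l1: "l1 \<in> L" using x unfolding dcoset_def by blast
      have h1c: "h1 \<in> carrier G" using h1 Hc by blast
      have l1c: "l1 \<in> carrier G" using l1 Lc by blast
      have skc: "\<sigma> k \<in> carrier G" using skH Hc by blast
      have "y = (\<sigma> k \<otimes>\<^bsub>G\<^esub> h1) \<otimes>\<^bsub>G\<^esub> g \<otimes>\<^bsub>G\<^esub> l1"
        unfolding y_def xe using skc h1c g l1c by (simp only: m_assoc m_closed)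
      moreover have "\<sigma> k \<otimes>\<^bsub>G\<^esub> h1 \<in> H" using skH h1 by simp
      ultimately show ?thesis unfolding dcoset_def using l1 by blast
    qed
    have "\<sigma> ` (y <#\<^bsub>G\<^esub> L) = y <#\<^bsub>G\<^esub> L"
    proof -
      have "\<sigma> ` (y <#\<^bsub>G\<^esub> L) = (\<lambda>l. \<sigma> y \<otimes>\<^bsub>G\<^esub> \<sigma> l) ` L" unfolding lc_img image_image
        using mu yc Lc by (intro image_cong) auto
      also have "\<dots> = (\<lambda>l. y \<otimes>\<^bsub>G\<^esub> l) ` (\<sigma> ` L)" using sy by (simp only: image_image)
      also have "\<dots> = y <#\<^bsub>G\<^esub> L" using sL unfolding lc_img by (simp only:)
      finally show ?thesis .
    qed
    then show ?thesis using yd by blast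
  qed
  have bw: "\<exists>y\<in>dcoset G H g L. \<sigma> ` (H #>\<^bsub>G\<^esub> y) = H #>\<^bsub>G\<^esub> y"
    if HL: "H1_trivial G \<sigma> L" and g: "g \<in> carrier G" and x: "x \<in> dcoset G H g L" and r: "\<sigma> ` (x <#\<^bsub>G\<^esub> L) = x <#\<^bsub>G\<^esub> L" for g x
  proof -
    have xc: "x \<in> carrier G" using dc[OF g] x by blast
    have "\<sigma> x \<in> \<sigma> ` (x <#\<^bsub>G\<^esub> L)" using xc by (simp add: l_coset_def)
    then obtain l where l: "l \<in> L" and sx: "\<sigma> x = x \<otimes>\<^bsub>G\<^esub> l" using r unfolding l_coset_def by auto
    have lc: "l \<in> carrier G" using l Lc by blast
    have "x = \<sigma> (x \<otimes>\<^bsub>G\<^esub> l)" using sx inv2[OF xc] by simp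
    also have "\<dots> = (x \<otimes>\<^bsub>G\<^esub> l) \<otimes>\<^bsub>G\<^esub> \<sigma> l" using sx mu[OF xc lc] by simp
    also have "\<dots> = x \<otimes>\<^bsub>G\<^esub> (l \<otimes>\<^bsub>G\<^esub> \<sigma> l)" using xc lc cl by (simp only: m_assoc)
    finally have e: "x = x \<otimes>\<^bsub>G\<^esub> (l \<otimes>\<^bsub>G\<^esub> \<sigma> l)" .
    have ll: "l \<otimes>\<^bsub>G\<^esub> \<sigma> l = \<one>\<^bsub>G\<^esub>" using e l_cancel_one'[OF xc m_closed[OF lc cl[OF lc]]] by blast
    then obtain m where m: "m \<in> L" and lm: "l = inv\<^bsub>G\<^esub> m \<otimes>\<^bsub>G\<^esub> \<sigma> m"
      using HL l unfolding H1_trivial_def by blast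
    have mc: "m \<in> carrier G" using m Lc by blast
    define y where "y = x \<otimes>\<^bsub>G\<^esub> inv\<^bsub>G\<^esub> m"
    have yc: "y \<in> carrier G" using y_def mc xc by simp
    have sy: "\<sigma> y = y"
    proof -
      have "\<sigma> y = (x \<otimes>\<^bsub>G\<^esub> (inv\<^bsub>G\<^esub> m \<otimes>\<^bsub>G\<^esub> \<sigma> m)) \<otimes>\<^bsub>G\<^esub> inv\<^bsub>G\<^esub> (\<sigma> m)" unfolding y_def by (simp only: mu[OF xc inv_closed[OF mc]] si[OF mc] sx lm)
      also have "\<dots> = y" unfolding y_def using mc cl xc by (simp add: m_assoc)
      finally show ?thesis .
    qed
    have yd: "y \<in> dcoset G H g L"
    proof -
      obtain h1 l1 where xe: "x = h1 \<otimes>\<^bsub>G\<^esub> g \<otimes>\<^bsub>G\<^esub> l1" and h1: "h1 \<in> H" and l1: "l1 \<in> L" using x unfolding dcoset_def by blast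
      have h1c: "h1 \<in> carrier G" using h1 Hc by blast
      have l1c: "l1 \<in> carrier G" using l1 Lc by blast
      have "y = h1 \<otimes>\<^bsub>G\<^esub> g \<otimes>\<^bsub>G\<^esub> (l1 \<otimes>\<^bsub>G\<^esub> inv\<^bsub>G\<^esub> m)"
        unfolding y_def xe by (rule m_assoc[OF m_closed[OF h1c g] l1c inv_closed[OF mc]])
      moreover have "l1 \<otimes>\<^bsub>G\<^esub> inv\<^bsub>G\<^esub> m \<in> L" using l1 m by simp
      moreover note h1
      ultimately show ?thesis unfolding dcoset_def by blast
    qed
    have "\<sigma> ` (H #>\<^bsub>G\<^esub> y) = H #>\<^bsub>G\<^esub> y"
    proof -
      have "\<sigma> ` (H #>\<^bsub>G\<^esub> y) = (\<lambda>h. \<sigma> h \<otimes>\<^bsub>G\<^esub> \<sigma> y) ` H" unfolding rc_img image_image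
        using mu yc Hc by (intro image_cong) auto
      also have "\<dots> = (\<lambda>h. h \<otimes>\<^bsub>G\<^esub> y) ` (\<sigma> ` H)" using sy by (simp only: image_image)
      also have "\<dots> = H #>\<^bsub>G\<^esub> y" using sH unfolding rc_img by (simp only:)
      finally show ?thesis .
    qed
    then show ?thesis using yd by blast
  qed
  show ?thesis
  proof (intro conjI impI)
    show "Xi' G \<sigma> H L \<subseteq> Xi G \<sigma> H L"
    proof
      fix D assume "D \<in> Xi' G \<sigma> H L"
      then obtain g where g: "g \<in> carrier G" and D: "D = dcoset G H g L"
        and ex: "\<exists>x\<in>dcoset G H g L. \<sigma> ` (H #>\<^bsub>G\<^esub> x) = H #>\<^bsub>G\<^esub> x"
        unfolding Xi'_def by blast
      then obtain x where x: "x \<in> dcoset G H g L" and r: "\<sigma> ` (H #>\<^bsub>G\<^esub> x) = H #>\<^bsub>G\<^esub> x"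
        by blast
      have "\<exists>y\<in>dcoset G H g L. \<sigma> ` (y <#\<^bsub>G\<^esub> L) = y <#\<^bsub>G\<^esub> L"
        using fw[OF g x r] .
      then show "D \<in> Xi G \<sigma> H L" unfolding Xi_def using g D by blast
    qed
    assume HL: "H1_trivial G \<sigma> L"
    have "Xi G \<sigma> H L \<subseteq> Xi' G \<sigma> H L"
    proof
      fix D assume "D \<in> Xi G \<sigma> H L"
      then obtain g where g: "g \<in> carrier G" and D: "D = dcoset G H g L"
        and ex: "\<exists>x\<in>dcoset G H g L. \<sigma> ` (x <#\<^bsub>G\<^esub> L) = x <#\<^bsub>G\<^esub> L"
        unfolding Xi_def by blast
      then obtain x where x: "x \<in> dcoset G H g L" and r: "\<sigma> ` (x <#\<^bsub>G\<^esub> L) = x <#\<^bsub>G\<^esub> L"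
        by blast
      obtain y where "y \<in> dcoset G H g L" "\<sigma> ` (H #>\<^bsub>G\<^esub> y) = H #>\<^bsub>G\<^esub> y"
        using bw[OF HL g x r] by blast
      then show "D \<in> Xi' G \<sigma> H L" unfolding Xi'_def using g D by blast
    qed
    then show "Xi' G \<sigma> H L = Xi G \<sigma> H L"
      using \<open>Xi' G \<sigma> H L \<subseteq> Xi G \<sigma> H L\<close> by (rule subset_antisym[rotated])
  qed
qed

end
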